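(* Let $X$ be a compact metric space and $f_{1,\infty}=\{f_n\}$ an equicontinuous sequence of continuous maps $f_n:X\to X$, and let $\mu_{1,\infty}=\{\mu_n\}$ be a sequence of Borel probability measures on $X$ with $f_n\mu_n=\mu_{n+1}$ for all $n$. If the closure of $\{\mu_n\}$ with respect to the strong topology on the space of Borel probability measures is compact, then the Misiurewicz class $\mathcal{E}_{\mathrm{M}}$ contains all constant sequences $\mathcal{P}_n\equiv\mathcal{P}$, $\mathcal{P}$ a finite Borel partition of $X$.
   Context: The strong topology on Borel probability measures is the topology of setwise convergence: $\mu_\alpha\to\mu$ iff $\mu_\alpha(A)\to\mu(A)$ for every Borel set $A$. Equicontinuity: for every $\varepsilon>0$ there is $\delta>0$ with $\varrho(f_nx,f_ny)<\varepsilon$ whenever $\varrho(x,y)<\delta$, for all $n$. Misiurewicz class $\mathcal{E}_{\mathrm{M}}$ (for the system with $X_n=X$ and measures $\mu_n$): the set of sequences $\{\mathcal{P}_n\}$ of finite Borel partitions $\mathcal{P}_n=\{P_{n,1},\dots,P_{n,k_n}\}$ of $X$ with $\sup_nk_n<\infty$ such that for every $\varepsilon>0$ there exist $\delta>0$ and compact sets $C_{n,i}\subset P_{n,i}$ with, for all $n$: (a) $\mu_n(P_{n,i}\setminus C_{n,i})\le\varepsilon$; (b) $\varrho(x,y)\ge\delta$ for all $x\in C_{n,i}$, $y\in C_{n,j}$, $i\neq j$. *)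

theory Defs
  imports "HOL-Probability.Probability"
begin

definition borel_prob_measures :: "'a::topological_space measure set" where
  "borel_prob_measures = {M. prob_space M \<and> sets M = sets (borel :: 'a measure)}"

text \<open>Strong topology: topology of setwise convergence, i.e. the coarsest topology on
  the Borel probability measures making every evaluation M |-> M(A), A Borel, continuous
  (pullback of the product topology on real-valued functions on the Borel sets).\<close>
definition strong_topology :: "'a::topological_space measure topology" where
  "strong_topology =
     pullback_topology borel_prob_measures
       (\<lambda>M. restrict (\<lambda>A. measure M A) (sets (borel :: 'a measure)))
       (product_topology (\<lambda>_. euclideanreal) (sets (borel :: 'a measure)))"

definition equicontinuous_seq :: "(nat \<Rightarrow> 'a::metric_space \<Rightarrow> 'a) \<Rightarrow> bool" where
  "equicontinuous_seq f \<longleftrightarrow>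
     (\<forall>\<epsilon>>0. \<exists>\<delta>>0. \<forall>n x y. dist x y < \<delta> \<longrightarrow> dist (f n x) (f n y) < \<epsilon>)"

definition finite_borel_partition :: "nat \<Rightarrow> (nat \<Rightarrow> 'a::topological_space set) \<Rightarrow> bool" where
  "finite_borel_partition k P \<longleftrightarrow>
     (\<forall>i<k. P i \<in> sets borel) \<and>
     (\<forall>i<k. \<forall>j<k. i \<noteq> j \<longrightarrow> P i \<inter> P j = {}) \<and>
     (\<Union>i<k. P i) = UNIV"

definition misiurewicz_class ::
  "(nat \<Rightarrow> 'a::metric_space measure) \<Rightarrow> (nat \<Rightarrow> nat) \<Rightarrow> (nat \<Rightarrow> nat \<Rightarrow> 'a set) \<Rightarrow> bool" where
  "misiurewicz_class \<mu> k P \<longleftrightarrow>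
     (\<forall>n. finite_borel_partition (k n) (P n)) \<and>
     bdd_above (range k) \<and>
     (\<forall>\<epsilon>>0. \<exists>\<delta>>0. \<exists>C :: nat \<Rightarrow> nat \<Rightarrow> 'a set.
        \<forall>n. \<forall>i<k n.
          compact (C n i) \<and> C n i \<subseteq> P n i \<and>
          measure (\<mu> n) (P n i - C n i) \<le> \<epsilon> \<and>
          (\<forall>j<k n. i \<noteq> j \<longrightarrow> (\<forall>x\<in>C n i. \<forall>y\<in>C n j. dist x y \<ge> \<delta>)))"

end

theory Submission
  imports Defs
begin

definition inner_cl :: "'a::metric_space measure \<Rightarrow> 'a set \<Rightarrow> bool" where
  "inner_cl M A \<longleftrightarrow> (\<forall>e>0. \<exists>F. closed F \<and> F \<subseteq> A \<and> measure M (A - F) < e)"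

lemma inner_cl_open:
  fixes M :: "'a::metric_space measure"
  assumes fm: "finite_measure M" and sb: "sets M = sets borel" and U: "open U"
  shows "inner_cl M U"
  unfolding inner_cl_def
proof (intro allI impI)
  fix e :: real assume e: "e > 0"
  interpret finite_measure M by fact
  show "\<exists>F. closed F \<and> F \<subseteq> U \<and> measure M (U - F) < e"
  proof (cases "U = UNIV")
    case True then show ?thesis using e by (intro exI[of _ UNIV]) auto
  next
    case False
    define F where "F n = {x. 1 / real (Suc n) \<le> infdist x (- U)}" for n
    have clF: "closed (F n)" for n
      unfolding F_def by (rule closed_Collect_le[OF continuous_on_const continuous_on_infdist[OF continuous_on_id]])
    have FU: "F n \<subseteq> U" for n
    proof
      fix x assume "x \<in> F n"
      then have "1 / real (Suc n) \<le> infdist x (-U)" unfolding F_def by simp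
      moreover have "0 < 1 / real (Suc n)" by simp
      ultimately have "infdist x (-U) > 0" by linarith
      then show "x \<in> U" 
      proof (rule contrapos_pp)
        assume "x \<notin> U" then have "x \<in> -U" by simp
        then show "\<not> infdist x (-U) > 0" using infdist_zero[of x "-U"] by simp
      qed
    qed
    have inc: "incseq F"
    proof (rule incseq_SucI)
      fix n
      have "1 / real (Suc (Suc n)) \<le> 1 / real (Suc n)"
        by (intro divide_left_mono) auto
      then show "F n \<subseteq> F (Suc n)" unfolding F_def by auto
    qed
    have UF: "(\<Union>n. F n) = U"
    proof
      show "(\<Union>n. F n) \<subseteq> U" using FU by auto
      show "U \<subseteq> (\<Union>n. F n)"
      proof
        fix x assume x: "x \<in> U"
        have "closed (-U)" using U by auto
        moreover have "x \<notin> -U" using x by auto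
        moreover have ne: "-U \<noteq> {}" using False by auto
        ultimately have "infdist x (-U) \<noteq> 0"
          using in_closed_iff_infdist_zero[of "-U" x] by blast
        then have "infdist x (-U) > 0" using infdist_nonneg[of x "-U"] by linarith
        then obtain n where "inverse (real (Suc n)) < infdist x (-U)"
          by (rule reals_Archimedean[elim_format]) blast
        then have "1 / real (Suc n) < infdist x (-U)" by (simp add: inverse_eq_divide)
        then show "x \<in> (\<Union>n. F n)" unfolding F_def by (auto intro!: exI[of _ n])
      qed
    qed
    have meas: "range F \<subseteq> sets M" using clF by (auto simp: sb)
    have "(\<lambda>n. measure M (F n)) \<longlonglongrightarrow> measure M U"
      using finite_Lim_measure_incseq[OF meas inc] UF by simp
    from LIMSEQ_D[OF this e] obtain N where "\<forall>n\<ge>N. norm (measure M (F n) - measure M U) < e" by blast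
    then have n: "dist (measure M (F N)) (measure M U) < e" by (simp add: dist_real_def)
    define n where "n = N" 
    note n = n[folded n_def]
    have "measure M (U - F n) = measure M U - measure M (F n)"
      using clF FU U by (intro finite_measure_Diff) (auto simp: sb)
    then show ?thesis using n clF FU by (intro exI[of _ "F n"]) (auto simp: dist_real_def)
  qed
qed

lemma inner_cl_Union:
  fixes M :: "'a::metric_space measure" and a :: "nat \<Rightarrow> 'a set"
  assumes fm: "finite_measure M" and sb: "sets M = sets borel"
    and am: "\<And>i. a i \<in> sets M" and ai: "\<And>i. inner_cl M (a i)"
  shows "inner_cl M (\<Union>i. a i)"
  unfolding inner_cl_def
proof (intro allI impI)
  fix e :: real assume e: "e > 0"
  interpret finite_measure M by fact
  define A where "A = (\<Union>i. a i)"
  define S where "S n = (\<Union>i<n. a i)" for n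
  have Sm: "S n \<in> sets M" for n unfolding S_def using am by auto
  have Am: "A \<in> sets M" unfolding A_def using am by auto
  have inc: "incseq S" unfolding S_def incseq_def by fastforce
  have SA: "(\<Union>n. S n) = A" unfolding S_def A_def by (auto intro: lessI)
  have "(\<lambda>n. measure M (S n)) \<longlonglongrightarrow> measure M A"
    using finite_Lim_measure_incseq[of S] Sm inc SA by auto
  from LIMSEQ_D[OF this, of "e/2"] e obtain N where
    "\<forall>n\<ge>N. norm (measure M (S n) - measure M A) < e/2" by auto
  then have "\<bar>measure M (S N) - measure M A\<bar> < e/2" by auto
  then have N: "measure M A - measure M (S N) < e/2" by linarith
  have "\<forall>i. \<exists>F. closed F \<and> F \<subseteq> a i \<and> measure M (a i - F) < e / (2 * (real N + 1))"
    using ai e unfolding inner_cl_def by (auto intro: divide_pos_pos)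
  then obtain F where F: "\<And>i. closed (F i)" "\<And>i. F i \<subseteq> a i"
    "\<And>i. measure M (a i - F i) < e / (2 * (real N + 1))" by metis
  have Fm: "F i \<in> sets M" for i using F(1) by (simp add: sb)
  define G where "G = (\<Union>i<N. F i)"
  have clG: "closed G" unfolding G_def using F(1) by auto
  have GA: "G \<subseteq> A" unfolding G_def A_def using F(2) by auto
  have sub: "A - G \<subseteq> (A - S N) \<union> (\<Union>i<N. a i - F i)"
    unfolding A_def S_def G_def by auto
  have "measure M (A - G) \<le> measure M ((A - S N) \<union> (\<Union>i<N. a i - F i))"
    using sub Am Sm am Fm by (intro finite_measure_mono) auto
  also have "\<dots> \<le> measure M (A - S N) + measure M (\<Union>i<N. a i - F i)"
    using Am Sm am Fm by (intro measure_subadditive) auto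
  also have "measure M (\<Union>i<N. a i - F i) \<le> (\<Sum>i<N. measure M (a i - F i))"
    using am F(1) by (intro finite_measure_subadditive_finite) (auto simp: sb)
  also have "\<dots> \<le> real (card {..<N}) * (e / (2 * (real N + 1)))"
    using F(3) by (intro sum_bounded_above less_imp_le) auto
  also have "\<dots> = real N * e / (2 * (real N + 1))" by simp
  also have "\<dots> \<le> e / 2"
    using e by (simp add: field_simps)
  also have "measure M (A - S N) = measure M A - measure M (S N)"
    using Am Sm by (intro finite_measure_Diff) (auto simp: S_def A_def)
  finally have "measure M (A - G) < e" using N by linarith
  then show "\<exists>F. closed F \<and> F \<subseteq> (\<Union>i. a i) \<and> measure M ((\<Union>i. a i) - F) < e"
    using clG GA unfolding A_def by blast
qed

lemma inner_cl_Inter: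
  fixes M :: "'a::metric_space measure" and b :: "nat \<Rightarrow> 'a set"
  assumes fm: "finite_measure M" and sb: "sets M = sets borel"
    and bm: "\<And>i. b i \<in> sets M" and bi: "\<And>i. inner_cl M (b i)"
  shows "inner_cl M (\<Inter>i. b i)"
  unfolding inner_cl_def
proof (intro allI impI)
  fix e :: real assume e: "e > 0"
  interpret finite_measure M by fact
  define c where "c i = e / 4 * (1/2) ^ i" for i :: nat
  have cpos: "c i > 0" for i unfolding c_def using e by auto
  have "\<forall>i. \<exists>F. closed F \<and> F \<subseteq> b i \<and> measure M (b i - F) < c i"
    using bi cpos unfolding inner_cl_def by auto
  then obtain F where F: "\<And>i. closed (F i)" "\<And>i. F i \<subseteq> b i"
    "\<And>i. measure M (b i - F i) < c i" by metis
  define G where "G = (\<Inter>i. F i)"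
  have clG: "closed G" unfolding G_def using F(1) by auto
  have GB: "G \<subseteq> (\<Inter>i. b i)" unfolding G_def using F(2) by auto
  have Dm: "b i - F i \<in> sets M" for i using bm F(1) by (auto simp: sb)
  have sc: "summable c" unfolding c_def
    by (intro summable_mult summable_geometric) auto
  have sumc: "(\<Sum>i. c i) = e / 2" unfolding c_def
    using suminf_mult[of "\<lambda>i. (1/2::real)^i" "e/4"] suminf_geometric[of "1/2::real"] summable_geometric[of "1/2::real"]
    by simp
  have sm: "summable (\<lambda>i. measure M (b i - F i))"
    by (rule summable_comparison_test[OF _ sc]) (auto intro!: exI[of _ 0] less_imp_le[OF F(3)])
  have "measure M ((\<Inter>i. b i) - G) \<le> measure M (\<Union>i. b i - F i)"
    using Dm unfolding G_def by (intro finite_measure_mono) auto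
  also have "\<dots> \<le> (\<Sum>i. measure M (b i - F i))"
    using Dm sm by (intro finite_measure_subadditive_countably) auto
  also have "\<dots> \<le> (\<Sum>i. c i)"
    using sm sc F(3) by (intro suminf_le less_imp_le) auto
  finally have "measure M ((\<Inter>i. b i) - G) < e" using sumc e by linarith
  then show "\<exists>F. closed F \<and> F \<subseteq> (\<Inter>i. b i) \<and> measure M ((\<Inter>i. b i) - F) < e"
    using clG GB by blast
qed

lemma inner_cl_borel:
  fixes M :: "'a::metric_space measure"
  assumes fm: "finite_measure M" and sb: "sets M = sets borel" and A: "A \<in> sets borel"
  shows "inner_cl M A \<and> inner_cl M (-A)"
proof -
  interpret finite_measure M by fact
  have cl: "inner_cl M C" if "closed C" for C
    unfolding inner_cl_def using that by (auto intro!: exI[of _ C])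
  from A have "A \<in> sigma_sets UNIV {S. open S}" by (simp add: sets_borel)
  then show ?thesis
  proof induct
    case (Basic a)
    then show ?case using inner_cl_open[OF fm sb] cl[of "- a"] by (auto simp: closed_Compl)
  next
    case Empty
    then show ?case using cl by auto
  next
    case (Compl a)
    then show ?case by (simp add: Compl_eq_Diff_UNIV[symmetric])
  next
    case (Union a)
    have am: "a i \<in> sets M" for i using Union(1)[of i] by (simp add: sb sets_borel)
    have "inner_cl M (\<Union>i. a i)" using inner_cl_Union[OF fm sb am] Union(2) by auto
    moreover have "inner_cl M (\<Inter>i. - a i)" using inner_cl_Inter[OF fm sb, of "\<lambda>i. - a i"] am Union(2)
      by (auto simp: sb)
    ultimately show ?case by simp
  qed
qed

lemma compact_inner:
  fixes M :: "'a::metric_space measure"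
  assumes cU: "compact (UNIV :: 'a set)" and fm: "finite_measure M" and sb: "sets M = sets borel"
    and A: "A \<in> sets borel" and e: "e > 0"
  shows "\<exists>K. compact K \<and> K \<subseteq> A \<and> measure M (A - K) < e"
proof -
  from inner_cl_borel[OF fm sb A] e obtain F where "closed F" "F \<subseteq> A" "measure M (A - F) < e"
    unfolding inner_cl_def by blast
  moreover have "compact F" using \<open>closed F\<close> cU compact_Int_closed[OF cU, of F] by simp
  ultimately show ?thesis by blast
qed

lemma sep_compact:
  fixes S T :: "'a::metric_space set"
  assumes S: "compact S" and T: "compact T" and ST: "S \<inter> T = {}"
  shows "\<exists>d>0. \<forall>x\<in>S. \<forall>y\<in>T. d \<le> dist x y"
proof (cases "S = {} \<or> T = {}")
  case True then show ?thesis by (auto intro!: exI[of _ 1])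
next
  case False
  have "compact (S \<times> T)" using S T by (rule compact_Times)
  moreover have "S \<times> T \<noteq> {}" using False by auto
  moreover have "continuous_on (S \<times> T) (\<lambda>z. dist (fst z) (snd z))"
    by (intro continuous_intros)
  ultimately obtain z where z: "z \<in> S \<times> T" "\<forall>w\<in>S \<times> T. dist (fst z) (snd z) \<le> dist (fst w) (snd w)"
    using continuous_attains_inf by blast
  have "fst z \<noteq> snd z" using z(1) ST by (auto simp: mem_Times_iff)
  then have "dist (fst z) (snd z) > 0" by simp
  then show ?thesis using z(2) by (intro exI[of _ "dist (fst z) (snd z)"]) auto
qed

lemma topspace_strong: "topspace (strong_topology :: 'a::topological_space measure topology) = borel_prob_measures"
  unfolding strong_topology_def topspace_pullback_topology by auto

lemma continuous_eval_strong:
  assumes D: "D \<in> sets (borel :: 'a::topological_space measure)"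
  shows "continuous_map (strong_topology :: 'a measure topology) euclideanreal (\<lambda>M. measure M D)"
proof -
  have "continuous_map (strong_topology :: 'a measure topology) euclideanreal
     ((\<lambda>g. g D) \<circ> (\<lambda>M. restrict (\<lambda>A. measure M A) (sets (borel :: 'a measure))))"
    unfolding strong_topology_def
    by (intro continuous_map_pullback continuous_map_product_projection[OF D, of "\<lambda>_. euclideanreal", simplified])
  moreover have "((\<lambda>g. g D) \<circ> (\<lambda>M. restrict (\<lambda>A. measure M A) (sets (borel :: 'a measure)))) = (\<lambda>M. measure M D)"
    using D by (auto simp: fun_eq_iff)
  ultimately show ?thesis by simp
qed

lemma uniform_tight:
  fixes \<mu> :: "nat \<Rightarrow> 'a::metric_space measure"
  assumes cU: "compact (UNIV :: 'a set)"
    and mu: "\<And>n. \<mu> n \<in> borel_prob_measures"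
    and cpt: "compactin strong_topology (strong_topology closure_of (range \<mu>))"
    and B: "B \<in> sets borel" and e: "e > 0"
  shows "\<exists>K. compact K \<and> K \<subseteq> B \<and> (\<forall>n. measure (\<mu> n) (B - K) < e)"
proof -
  define Cl where "Cl = strong_topology closure_of (range \<mu>)"
  define U where "U K = {M \<in> topspace strong_topology. measure M (B - K) \<in> {..<e}}" for K :: "'a set"
  have opn: "openin strong_topology (U K)" if "compact K" for K
  proof -
    have "B - K \<in> sets borel" using B that by (intro sets.Diff[OF B] borel_closed compact_imp_closed)
    then show ?thesis unfolding U_def
      by (intro openin_continuous_map_preimage[OF continuous_eval_strong]) auto
  qed
  have ClT: "Cl \<subseteq> borel_prob_measures"
    unfolding Cl_def using closure_of_subset_topspace topspace_strong by metis
  have muCl: "\<mu> n \<in> Cl" for n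
    unfolding Cl_def using mu by (intro in_closure_of[THEN iffD2]) (auto simp: topspace_strong)
  have cover: "Cl \<subseteq> \<Union>(U ` {K. compact K \<and> K \<subseteq> B})"
  proof
    fix M assume "M \<in> Cl"
    then have M: "M \<in> borel_prob_measures" using ClT by auto
    then have "prob_space M" "sets M = sets borel" unfolding borel_prob_measures_def by auto
    then have "finite_measure M" by (simp add: prob_space.finite_measure)
    from compact_inner[OF cU this \<open>sets M = sets borel\<close> B e] obtain K where
      "compact K" "K \<subseteq> B" "measure M (B - K) < e" by blast
    then show "M \<in> \<Union>(U ` {K. compact K \<and> K \<subseteq> B})"
      using M unfolding U_def by (auto simp: topspace_strong)
  qed
  have cc: "\<And>\<U>. (\<forall>u\<in>\<U>. openin strong_topology u) \<Longrightarrow> Cl \<subseteq> \<Union>\<U> \<Longrightarrow> \<exists>F. finite F \<and> F \<subseteq> \<U> \<and> Cl \<subseteq> \<Union>F"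
    using cpt unfolding Cl_def compactin_def by blast
  have "\<forall>u\<in>U ` {K. compact K \<and> K \<subseteq> B}. openin strong_topology u" using opn by blast
  from cc[OF this cover] obtain F where
    F: "finite F" "F \<subseteq> U ` {K. compact K \<and> K \<subseteq> B}" "Cl \<subseteq> \<Union>F"
    by blast
  from finite_subset_image[OF F(1) F(2)] obtain Ks where
    Ks: "Ks \<subseteq> {K. compact K \<and> K \<subseteq> B}" "finite Ks" "F = U ` Ks" by blast
  define K where "K = \<Union>Ks"
  have cK: "compact K" unfolding K_def using Ks by (intro compact_Union) auto
  have KB: "K \<subseteq> B" unfolding K_def using Ks by auto
  have "measure (\<mu> n) (B - K) < e" for n
  proof -
    from muCl[of n] F(3) Ks(3) obtain K' where K': "K' \<in> Ks" "\<mu> n \<in> U K'" by auto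
    then have lt: "measure (\<mu> n) (B - K') < e" unfolding U_def by auto
    have "prob_space (\<mu> n)" "sets (\<mu> n) = sets borel" using mu[of n] unfolding borel_prob_measures_def by auto
    then interpret prob_space "\<mu> n" by simp
    have "B - K \<subseteq> B - K'" using K' unfolding K_def by auto
    moreover have "B - K' \<in> sets (\<mu> n)" unfolding \<open>sets (\<mu> n) = sets borel\<close>
      using B Ks K' by (intro sets.Diff[OF B] borel_closed compact_imp_closed) auto
    ultimately have "measure (\<mu> n) (B - K) \<le> measure (\<mu> n) (B - K')"
      by (rule finite_measure_mono)
    then show ?thesis using lt by linarith
  qed
  then show ?thesis using cK KB by blast
qed

theorem mainTheorem16:
  fixes f :: "nat \<Rightarrow> 'a::metric_space \<Rightarrow> 'a"
    and \<mu> :: "nat \<Rightarrow> 'a measure"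
  assumes "compact (UNIV :: 'a set)"
    and "\<And>n. continuous_on UNIV (f n)"
    and "equicontinuous_seq f"
    and "\<And>n. \<mu> n \<in> borel_prob_measures"
    and "\<And>n. distr (\<mu> n) borel (f n) = \<mu> (Suc n)"
    and "compactin strong_topology (strong_topology closure_of (range \<mu>))"
    and "finite_borel_partition k P"
  shows "misiurewicz_class \<mu> (\<lambda>_. k) (\<lambda>_. P)"
  unfolding misiurewicz_class_def
proof (intro conjI allI impI)
  show "finite_borel_partition k P" for n :: nat by fact
  show "bdd_above (range (\<lambda>_::nat. k))" by simp
  fix \<epsilon> :: real assume e: "\<epsilon> > 0"
  have Pb: "P i \<in> sets borel" if "i < k" for i
    using assms(7) that unfolding finite_borel_partition_def by auto
  have Pd: "P i \<inter> P j = {}" if "i < k" "j < k" "i \<noteq> j" for i j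
    using assms(7) that unfolding finite_borel_partition_def by auto
  have "\<forall>i\<in>{..<k}. \<exists>K. compact K \<and> K \<subseteq> P i \<and> (\<forall>n. measure (\<mu> n) (P i - K) < \<epsilon>)"
    using uniform_tight[OF assms(1) assms(4) assms(6) Pb e] by auto
  then obtain K where "\<forall>i\<in>{..<k}. compact (K i) \<and> K i \<subseteq> P i \<and> (\<forall>n. measure (\<mu> n) (P i - K i) < \<epsilon>)"
    by (rule bchoice[THEN exE]) blast
  then have K: "\<And>i. i < k \<Longrightarrow> compact (K i)" "\<And>i. i < k \<Longrightarrow> K i \<subseteq> P i"
    "\<And>i n. i < k \<Longrightarrow> measure (\<mu> n) (P i - K i) < \<epsilon>" by auto
  have "\<forall>ij\<in>{(i,j). i < k \<and> j < k \<and> i \<noteq> j}. \<exists>d>0. \<forall>x\<in>K (fst ij). \<forall>y\<in>K (snd ij). d \<le> dist x y"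
  proof
    fix ij assume "ij \<in> {(i,j). i < k \<and> j < k \<and> i \<noteq> j}"
    then obtain i j where ij: "ij = (i,j)" "i < k" "j < k" "i \<noteq> j" by auto
    have "K i \<inter> K j = {}" using K(2)[OF ij(2)] K(2)[OF ij(3)] Pd[OF ij(2-4)] by auto
    then show "\<exists>d>0. \<forall>x\<in>K (fst ij). \<forall>y\<in>K (snd ij). d \<le> dist x y"
      using sep_compact[OF K(1)[OF ij(2)] K(1)[OF ij(3)]] ij(1) by simp
  qed
  then obtain d where d0: "\<forall>ij\<in>{(i,j). i < k \<and> j < k \<and> i \<noteq> j}. d ij > 0 \<and>
      (\<forall>x\<in>K (fst ij). \<forall>y\<in>K (snd ij). d ij \<le> dist x y)"
    by (rule bchoice[THEN exE]) blast
  then have d: "\<And>ij. ij \<in> {(i,j). i < k \<and> j < k \<and> i \<noteq> j} \<Longrightarrow> d ij > 0 \<and>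
      (\<forall>x\<in>K (fst ij). \<forall>y\<in>K (snd ij). d ij \<le> dist x y)" by blast
  define I where "I = {(i,j). i < k \<and> j < k \<and> i \<noteq> j}"
  have finI: "finite I" unfolding I_def
    by (rule finite_subset[of _ "{..<k} \<times> {..<k}"]) auto
  define \<delta> where "\<delta> = Min (insert 1 (d ` I))"
  have dpos: "\<delta> > 0" unfolding \<delta>_def using finI d I_def by (subst Min_gr_iff) auto
  have dle: "\<delta> \<le> d (i,j)" if "i < k" "j < k" "i \<noteq> j" for i j
    unfolding \<delta>_def using finI that I_def by (intro Min_le) auto
  show "\<exists>\<delta>>0. \<exists>C :: nat \<Rightarrow> nat \<Rightarrow> 'a set. \<forall>n. \<forall>i<k.
          compact (C n i) \<and> C n i \<subseteq> P i \<and>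
          measure (\<mu> n) (P i - C n i) \<le> \<epsilon> \<and>
          (\<forall>j<k. i \<noteq> j \<longrightarrow> (\<forall>x\<in>C n i. \<forall>y\<in>C n j. dist x y \<ge> \<delta>))"
  proof (intro exI[of _ \<delta>] conjI dpos exI[of _ "\<lambda>_. K"] allI impI ballI)
    fix n i j x y assume i: "i < k" and j: "j < k" "i \<noteq> j" and x: "x \<in> K i" and y: "y \<in> K j"
    have "d (i,j) \<le> dist x y" using d[of "(i,j)"] i j x y by auto
    then show "dist x y \<ge> \<delta>" using dle[OF i j] by linarith
  qed (use K in \<open>auto intro: less_imp_le\<close>)
qed

end
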